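(* For every migration factor $M\ge 0$, every deterministic semi-online algorithm with migration factor $M$ for scheduling on two hierarchical machines, in the variant where the total size of all jobs (rather than the optimal makespan) is known in advance, has competitive ratio at least $\frac{\sqrt{33}-1}{4}\approx 1.18614$.
   Context: Model (two hierarchical machines with migration). Jobs $1,2,\dots,n$ arrive one by one ($n$ unknown in advance). Job $j$ has a size $p_j>0$ and a grade of service (GoS) $g_j\in\{1,2\}$; a job of GoS $1$ may only be processed on machine $m_1$, a job of GoS $2$ may be processed on $m_1$ or on $m_2$. The load of a machine is the total size of its jobs, the makespan is the maximum load. When job $j$ arrives, the algorithm must assign it, and may migrate previously arrived jobs (respecting GoS) of total size at most $M\cdot p_j$ (migration factor $M$). In this variant, the algorithm is told in advance the total size $\sum_j p_j$ of the whole input (but not the optimal makespan). The competitive ratio is the supremum over inputs of (algorithm's makespan)/(optimal offline makespan). *)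

theory Defs
  imports Complex_Main "HOL-Library.Extended_Real"
begin

text \<open>A job is a pair (size, GoS). An input is a list of jobs, in arrival order.
Machines are numbered 1 (= m1) and 2 (= m2). An assignment is a map from job
indices (0-based positions in the list) to machines.\<close>

type_synonym job = "real \<times> nat"

definition valid_input :: "job list \<Rightarrow> bool" where
  "valid_input xs \<longleftrightarrow> (\<forall>j\<in>set xs. fst j > 0 \<and> snd j \<in> {1, 2})"

definition total_size :: "job list \<Rightarrow> real" where
  "total_size xs = (\<Sum>j\<leftarrow>xs. fst j)"

definition feasible :: "job list \<Rightarrow> (nat \<Rightarrow> nat) \<Rightarrow> bool" where
  "feasible xs \<sigma> \<longleftrightarrow> (\<forall>i < length xs. \<sigma> i \<in> {1, 2} \<and> (snd (xs ! i) = 1 \<longrightarrow> \<sigma> i = 1))"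

definition load :: "job list \<Rightarrow> (nat \<Rightarrow> nat) \<Rightarrow> nat \<Rightarrow> real" where
  "load xs \<sigma> m = (\<Sum>i \<in> {i. i < length xs \<and> \<sigma> i = m}. fst (xs ! i))"

definition makespan :: "job list \<Rightarrow> (nat \<Rightarrow> nat) \<Rightarrow> real" where
  "makespan xs \<sigma> = max (load xs \<sigma> 1) (load xs \<sigma> 2)"

definition opt_makespan :: "job list \<Rightarrow> real" where
  "opt_makespan xs = (INF \<sigma> \<in> {\<sigma>. feasible xs \<sigma>}. makespan xs \<sigma>)"

definition migrated :: "job list \<Rightarrow> nat \<Rightarrow> (nat \<Rightarrow> nat) \<Rightarrow> (nat \<Rightarrow> nat) \<Rightarrow> real" where
  "migrated xs k \<sigma> \<tau> = (\<Sum>i \<in> {i. i < k \<and> \<sigma> i \<noteq> \<tau> i}. fst (xs ! i))"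

text \<open>A deterministic semi-online algorithm knowing the total size is a function
  A T prefix, returning the assignment of the jobs of the prefix after the last job
  of the prefix has been processed (T = total size of the whole input, given in advance).\<close>
definition semi_online_alg :: "real \<Rightarrow> (real \<Rightarrow> job list \<Rightarrow> nat \<Rightarrow> nat) \<Rightarrow> bool" where
  "semi_online_alg M A \<longleftrightarrow>
     (\<forall>xs. valid_input xs \<longrightarrow>
        (\<forall>k \<le> length xs. feasible (take k xs) (A (total_size xs) (take k xs))) \<and>
        (\<forall>k < length xs.
            migrated xs k (A (total_size xs) (take k xs)) (A (total_size xs) (take (Suc k) xs))
              \<le> M * fst (xs ! k)))"

definition alg_makespan :: "(real \<Rightarrow> job list \<Rightarrow> nat \<Rightarrow> nat) \<Rightarrow> job list \<Rightarrow> real" where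
  "alg_makespan A xs = makespan xs (A (total_size xs) xs)"

definition competitive_ratio :: "(real \<Rightarrow> job list \<Rightarrow> nat \<Rightarrow> nat) \<Rightarrow> ereal" where
  "competitive_ratio A =
     (SUP xs \<in> {xs. valid_input xs \<and> xs \<noteq> []}. ereal (alg_makespan A xs / opt_makespan xs))"

end

theory Submission
  imports Defs
begin

lemma pos_of_valid: "valid_input xs \<Longrightarrow> i < length xs \<Longrightarrow> fst (xs ! i) > 0"
  unfolding valid_input_def using nth_mem by blast

lemma load_nonneg: "valid_input xs \<Longrightarrow> load xs \<sigma> m \<ge> 0"
  unfolding load_def by (rule sum_nonneg) (auto dest: pos_of_valid[THEN less_imp_le])

lemma load_ge:
  assumes "valid_input xs" "I \<subseteq> {i. i < length xs \<and> \<sigma> i = m}"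
  shows "(\<Sum>i\<in>I. fst (xs ! i)) \<le> load xs \<sigma> m"
  unfolding load_def
  by (rule sum_mono2) (use assms in \<open>auto dest: pos_of_valid[THEN less_imp_le]\<close>)

lemma migrated_ge:
  assumes "valid_input xs" "j < k" "k \<le> length xs" "\<sigma> j \<noteq> \<tau> j"
  shows "fst (xs ! j) \<le> migrated xs k \<sigma> \<tau>"
proof -
  have "(\<Sum>i\<in>{j}. fst (xs ! i)) \<le> migrated xs k \<sigma> \<tau>"
    unfolding migrated_def
  proof (rule sum_mono2)
    fix b assume "b \<in> {i. i < k \<and> \<sigma> i \<noteq> \<tau> i} - {j}"
    then have "b < length xs" using assms by auto
    then show "0 \<le> fst (xs ! b)" using pos_of_valid[OF assms(1)] less_imp_le by blast
  qed (use assms in auto)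
  thus ?thesis by simp
qed

lemma fixed_big:
  assumes sem: "semi_online_alg M A" and val: "valid_input xs"
    and small: "\<And>i. 2 \<le> i \<Longrightarrow> i < length xs \<Longrightarrow> M * fst (xs ! i) < 1"
    and b0: "fst (xs ! 0) = 1" and b1: "fst (xs ! 1) = 1"
    and k2: "2 \<le> k" and kl: "k \<le> length xs" and j2: "j < 2"
  shows "A (total_size xs) (take k xs) j = A (total_size xs) (take 2 xs) j"
  using k2 kl
proof (induction k rule: dec_induct)
  case base then show ?case by simp
next
  case (step n)
  have mig: "migrated xs n (A (total_size xs) (take n xs)) (A (total_size xs) (take (Suc n) xs))
              \<le> M * fst (xs ! n)"
    using sem val step.prems unfolding semi_online_alg_def by auto
  have "A (total_size xs) (take (Suc n) xs) j = A (total_size xs) (take n xs) j"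
  proof (rule ccontr)
    assume ne: "A (total_size xs) (take (Suc n) xs) j \<noteq> A (total_size xs) (take n xs) j"
    have "fst (xs ! j) \<le> migrated xs n (A (total_size xs) (take n xs)) (A (total_size xs) (take (Suc n) xs))"
      by (rule migrated_ge) (use val step j2 ne in auto)
    moreover have "fst (xs ! j) = 1" using j2 b0 b1 by (cases j) (auto simp: numeral_2_eq_2 less_Suc_eq)
    moreover have "M * fst (xs ! n) < 1" using small step by auto
    ultimately show False using mig by linarith
  qed
  then show ?case using step by simp
qed

lemma opt_le:
  assumes "valid_input xs" "feasible xs \<tau>"
  shows "opt_makespan xs \<le> makespan xs \<tau>"
  unfolding opt_makespan_def
proof (rule cINF_lower)
  show "bdd_below (makespan xs ` {\<sigma>. feasible xs \<sigma>})"
    by (rule bdd_belowI[where m=0]) (auto simp: makespan_def intro: max.coboundedI1 load_nonneg[OF assms(1)])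
qed (use assms in auto)

lemma opt_ge1:
  assumes val: "valid_input xs" "feasible xs \<tau>" "xs \<noteq> []" "fst (xs ! 0) = 1"
  shows "1 \<le> opt_makespan xs"
  unfolding opt_makespan_def
proof (rule cINF_greatest)
  show "{\<sigma>. feasible xs \<sigma>} \<noteq> {}" using assms by auto
next
  fix \<sigma> assume "\<sigma> \<in> {\<sigma>. feasible xs \<sigma>}"
  then have f: "\<sigma> 0 \<in> {1,2}" using assms unfolding feasible_def by auto
  have "(\<Sum>i\<in>{0}. fst (xs ! i)) \<le> load xs \<sigma> (\<sigma> 0)"
    by (rule load_ge) (use assms in auto)
  then have "1 \<le> load xs \<sigma> (\<sigma> 0)" using assms by simp
  then show "1 \<le> makespan xs \<sigma>" using f unfolding makespan_def by auto
qed

theorem mainTheorem17: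
  fixes M :: real and A :: "real \<Rightarrow> job list \<Rightarrow> nat \<Rightarrow> nat"
  assumes "M \<ge> 0" and "semi_online_alg M A"
  shows "competitive_ratio A \<ge> ereal ((sqrt 33 - 1) / 4)"
proof -
  note M0 = assms(1) and sem = assms(2)
  define S where "S = (sqrt 33 - 3) / 2"
  have s33: "sqrt 33 * sqrt 33 = 33" by simp
  have q3: "3 < sqrt 33" by (rule real_less_rsqrt) simp
  have q7: "sqrt 33 < 7" by (rule real_sqrt_less_iff[THEN iffD2, of 33 49, simplified]) 
  have S0: "0 < S" using q3 by (simp add: S_def)
  have S2: "S < 2" using q7 by (simp add: S_def)
  define k where "k = nat \<lceil>M * S\<rceil> + 1"
  have k0: "0 < k" by (simp add: k_def)
  have "M * S \<le> real (nat \<lceil>M * S\<rceil>)" by linarith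
  moreover have "0 \<le> M * S" using M0 S0 by simp
  ultimately have kMS: "M * S < 2 * real k" unfolding k_def of_nat_add of_nat_1
    using add_strict_increasing2 by (smt (verit))
  define e where "e = S / (2 * real k)"
  have e0: "0 < e" using S0 k0 by (simp add: e_def)
  have ke: "real k * e = S / 2" using k0 by (simp add: e_def)
  have Me: "M * e < 1" using kMS k0 by (simp add: e_def field_simps)
  define xs where "xs g = [(1::real,2::nat),(1,2)] @ replicate (2*k) (e,g)" for g
  have len: "length (xs g) = 2 + 2 * k" for g by (simp add: xs_def)
  have n0: "xs g ! 0 = (1,2)" and n1: "xs g ! 1 = (1,2)" for g by (simp_all add: xs_def)
  have n1': "xs g ! Suc 0 = (1,2)" for g by (simp add: xs_def)
  have ni: "2 \<le> i \<Longrightarrow> i < 2 + 2*k \<Longrightarrow> xs g ! i = (e,g)" for g i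
    by (simp add: xs_def nth_append)
  have val: "g \<in> {1,2} \<Longrightarrow> valid_input (xs g)" for g
    using e0 by (auto simp: valid_input_def xs_def)
  have tot: "total_size (xs g) = 2 + S" for g
    using ke by (simp add: total_size_def xs_def sum_list_replicate)
  have tk2: "take 2 (xs g) = [(1,2),(1,2)]" for g by (simp add: xs_def)
  define T where "T = 2 + S"
  define \<sigma>0 where "\<sigma>0 = A T [(1,2),(1,2)]"
  have "feasible (take 2 (xs 1)) (A (total_size (xs 1)) (take 2 (xs 1)))"
    using sem val[of 1] len[of 1] unfolding semi_online_alg_def by auto
  then have f0: "\<sigma>0 0 \<in> {1,2}" and f1: "\<sigma>0 1 \<in> {1,2}"
    unfolding tk2 tot feasible_def \<sigma>0_def T_def by auto
  have fin: "A T (xs g) j = \<sigma>0 j" if "g \<in> {1,2}" "j < 2" for g j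
  proof -
    have "A (total_size (xs g)) (take (length (xs g)) (xs g)) j = A (total_size (xs g)) (take 2 (xs g)) j"
      by (rule fixed_big[OF sem val[OF that(1)]]) (use Me that in \<open>auto simp: len ni n0 n1 xs_def\<close>)
    then show ?thesis by (simp add: tot tk2 T_def \<sigma>0_def)
  qed
  have feasA: "feasible (xs g) (A T (xs g))" if "g \<in> {1,2}" for g
    using sem val[OF that] unfolding semi_online_alg_def
    by (metis order_refl take_all tot T_def)
  have cr: "ereal (alg_makespan A (xs g) / opt_makespan (xs g)) \<le> competitive_ratio A"
    if "g \<in> {1,2}" for g
    unfolding competitive_ratio_def
    by (rule SUP_upper) (use val[OF that] in \<open>auto simp: xs_def\<close>)
  have key: "a \<le> al \<Longrightarrow> 0 < opt \<Longrightarrow> opt \<le> b \<Longrightarrow> 0 < b \<Longrightarrow> 0 \<le> a \<Longrightarrow> a / b \<le> al / opt"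
    for a al opt b :: real
    by (rule frac_le) auto
  show ?thesis
  proof (cases "\<sigma>0 0 = \<sigma>0 1")
    case False
    \<comment> \<open>big jobs apart: use GoS-1 sand\<close>
    define \<sigma> where "\<sigma> = A T (xs 1)"
    have s01: "\<sigma> 0 = \<sigma>0 0" "\<sigma> 1 = \<sigma>0 1" using fin[of 1 0] fin[of 1 1] by (auto simp: \<sigma>_def)
    obtain j0 where j0: "j0 < 2" "\<sigma> j0 = 1" proof -
      have "\<sigma> 0 = 1 \<or> \<sigma> 1 = 1" using f0 f1 False s01 by auto
      then show ?thesis using that[of 0] that[of 1] by auto
    qed
    have sand1: "\<sigma> i = 1" if "2 \<le> i" "i < 2 + 2*k" for i
      using feasA[of 1] that unfolding feasible_def \<sigma>_def by (auto simp: len ni)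
    have "(\<Sum>i\<in>insert j0 {2..<2+2*k}. fst (xs 1 ! i)) \<le> load (xs 1) \<sigma> 1"
      by (rule load_ge[OF val]) (use j0 sand1 in \<open>auto simp: len\<close>)
    moreover have "(\<Sum>i\<in>insert j0 {2..<2+2*k}. fst (xs 1 ! i)) = 1 + S"
    proof -
      have "(\<Sum>i\<in>{2..<2+2*k}. fst (xs 1 ! i)) = (\<Sum>i\<in>{2..<2+2*k}. e)"
        by (rule sum.cong) (auto simp: ni)
      also have "\<dots> = S" using ke by simp
      finally show ?thesis using j0 n0 n1 by (auto simp: less_2_cases_iff)
    qed
    ultimately have alg: "1 + S \<le> alg_makespan A (xs 1)"
      unfolding alg_makespan_def tot T_def[symmetric] makespan_def \<sigma>_def by auto
    define \<tau> :: "nat \<Rightarrow> nat" where "\<tau> i = (if i < 2 then 2 else 1::nat)" for i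
    have ft: "feasible (xs 1) \<tau>" by (auto simp: feasible_def \<tau>_def len n0 n1 xs_def nth_append less_2_cases_iff)
    have l1: "load (xs 1) \<tau> 1 = S"
    proof -
      have "{i. i < length (xs 1) \<and> \<tau> i = 1} = {2..<2+2*k}" by (auto simp: len \<tau>_def)
      then have "load (xs 1) \<tau> 1 = (\<Sum>i\<in>{2..<2+2*k}. fst (xs 1 ! i))" by (simp add: load_def)
      also have "\<dots> = (\<Sum>i\<in>{2..<2+2*k}. e)" by (rule sum.cong) (auto simp: ni)
      finally show ?thesis using ke by simp
    qed
    have l2: "load (xs 1) \<tau> 2 = 2"
    proof -
      have "{i. i < length (xs 1) \<and> \<tau> i = 2} = {0,1}" by (auto simp: len \<tau>_def)
      then show ?thesis by (simp add: load_def n0 n1 n1')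
    qed
    have opt: "opt_makespan (xs 1) \<le> 2"
      using opt_le[OF val ft] l1 l2 S2 by (simp add: makespan_def)
    have opt1: "1 \<le> opt_makespan (xs 1)" by (rule opt_ge1[OF val ft]) (auto simp: xs_def n0)
    have "(1 + S) / 2 \<le> alg_makespan A (xs 1) / opt_makespan (xs 1)"
      by (rule key) (use alg opt opt1 S0 in auto)
    moreover have "(1 + S) / 2 = (sqrt 33 - 1) / 4" by (simp add: S_def field_simps)
    ultimately show ?thesis using cr[of 1] by (metis ereal_less_eq(3) insertI1 order_trans)
  next
    case True
    define \<sigma> where "\<sigma> = A T (xs 2)"
    have s01: "\<sigma> 0 = \<sigma>0 0" "\<sigma> 1 = \<sigma>0 0" using fin[of 2 0] fin[of 2 1] True by (auto simp: \<sigma>_def)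
    have "(\<Sum>i\<in>{0,1}. fst (xs 2 ! i)) \<le> load (xs 2) \<sigma> (\<sigma>0 0)"
      by (rule load_ge[OF val]) (use s01 in \<open>auto simp: len\<close>)
    then have "2 \<le> load (xs 2) \<sigma> (\<sigma>0 0)" by (simp add: n0 n1 n1')
    then have alg: "2 \<le> alg_makespan A (xs 2)"
      using f0 unfolding alg_makespan_def tot T_def[symmetric] makespan_def \<sigma>_def by auto
    define \<tau> :: "nat \<Rightarrow> nat" where "\<tau> i = (if i = 0 then 1 else if i < 2 then 2 else if i < 2 + k then 1 else 2::nat)" for i
    have ft: "feasible (xs 2) \<tau>" by (auto simp: feasible_def \<tau>_def len n0 n1 xs_def nth_append ni)
    have l1: "load (xs 2) \<tau> 1 = 1 + S/2"
    proof -
      have "{i. i < length (xs 2) \<and> \<tau> i = 1} = insert 0 {2..<2+k}" by (auto simp: len \<tau>_def)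
      then have "load (xs 2) \<tau> 1 = (\<Sum>i\<in>insert 0 {2..<2+k}. fst (xs 2 ! i))" by (simp add: load_def)
      also have "\<dots> = 1 + (\<Sum>i\<in>{2..<2+k}. fst (xs 2 ! i))" by (simp add: n0)
      also have "(\<Sum>i\<in>{2..<2+k}. fst (xs 2 ! i)) = (\<Sum>i\<in>{2..<2+k}. e)" by (rule sum.cong) (auto simp: ni)
      finally show ?thesis using ke by simp
    qed
    have l2: "load (xs 2) \<tau> 2 = 1 + S/2"
    proof -
      have "{i. i < length (xs 2) \<and> \<tau> i = 2} = insert 1 {2+k..<2+2*k}" by (auto simp: len \<tau>_def)
      then have "load (xs 2) \<tau> 2 = (\<Sum>i\<in>insert 1 {2+k..<2+2*k}. fst (xs 2 ! i))" by (simp add: load_def)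
      also have "\<dots> = 1 + (\<Sum>i\<in>{2+k..<2+2*k}. fst (xs 2 ! i))" by (simp add: n1 n1')
      also have "(\<Sum>i\<in>{2+k..<2+2*k}. fst (xs 2 ! i)) = (\<Sum>i\<in>{2+k..<2+2*k}. e)" by (rule sum.cong) (auto simp: ni)
      finally show ?thesis using ke by simp
    qed
    have opt: "opt_makespan (xs 2) \<le> 1 + S/2"
      using opt_le[OF val ft] l1 l2 by (simp add: makespan_def)
    have opt1: "1 \<le> opt_makespan (xs 2)" by (rule opt_ge1[OF val ft]) (auto simp: xs_def n0)
    have "2 / (1 + S/2) \<le> alg_makespan A (xs 2) / opt_makespan (xs 2)"
      by (rule key) (use alg opt opt1 S0 in auto)
    moreover have "2 / (1 + S/2) = (sqrt 33 - 1) / 4"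
    proof -
      have h: "1 + S/2 = (1 + sqrt 33)/4" by (simp add: S_def field_simps)
      have "(1 + sqrt 33) * (sqrt 33 - 1) = 32" using s33 by (simp add: algebra_simps)
      have "0 < 1 + sqrt 33" using q3 by simp
      have "2 / (1 + S/2) = 8 / (1 + sqrt 33)" unfolding h by simp
      also have "\<dots> = (sqrt 33 - 1) / 4"
        using \<open>0 < 1 + sqrt 33\<close> \<open>(1 + sqrt 33) * (sqrt 33 - 1) = 32\<close>
        by (simp add: divide_eq_eq field_simps)
      finally show ?thesis .
    qed
    ultimately show ?thesis using cr[of 2] by (metis ereal_less_eq(3) insertI1 insertI2 order_trans singletonI)
  qed
qed

end
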